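(* (a) Let $\sigma^{(1)},\sigma^{(2)}$ be admissible controls with $\sigma^{(1)}(t)\ge\sigma^{(2)}(t)$ for all $t$, and let $w^{(i)}=(x_b^{(i)},x_d^{(i)},y^{(i)})$ solve $\dot w=f(t,w;\sigma^{(i)}(t))$ with $w^{(i)}(0)\in R(0)$ and $w^{(1)}(0)\ge w^{(2)}(0)$. Then $w^{(1)}(t)\ge w^{(2)}(t)$ for all $t\ge0$. (b) Let $y^{(1)},y^{(2)}:[0,\infty)\to\mathbb R$ be continuous with $s(t)\ge y^{(1)}(t)\ge y^{(2)}(t)\ge0$ for all $t$, and let $(x_b^{(i)},x_d^{(i)})$ solve $\dot{(x_b,x_d)}=g(t,(x_b,x_d);y^{(i)}(t))$ with $0\le x_b^{(i)}(0)\le b(0)$, $0\le x_d^{(i)}(0)\le d(0)$ and $(x_b^{(1)}(0),x_d^{(1)}(0))\ge(x_b^{(2)}(0),x_d^{(2)}(0))$. Then $(x_b^{(1)}(t),x_d^{(1)}(t))\ge(x_b^{(2)}(t),x_d^{(2)}(t))$ for all $t\ge0$.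
   Context: Fix $\lambda>0$, $\beta>0$, $\Gamma\in(0,1]$, $d_0\in(0,1)$. Let $(b(t),d(t))$ solve $\dot b=\beta d$, $\dot d=-\beta d+\lambda\Gamma ds$ with $b(0)=0$, $d(0)=d_0$, where $s=1-b-d$. For $w=(x_b,x_d,y)$ and control value $\sigma\in[0,1]$, define $f(t,w;\sigma)=(f_{x_b},f_{x_d},f_y)$ by $f_{x_b}=\beta x_d+\lambda(b-x_b)(x+y)$, $f_{x_d}=\Gamma\lambda(d-x_d)y+\Gamma\lambda x_ds+\lambda(d-x_d)(x+y)-\beta x_d$, $f_y=-\Gamma\lambda dy+\lambda\sigma(s-y)(x_b+y+(1-\Gamma)x_d)$, with $x=x_b+x_d$ and $b,d,s$ evaluated at $t$. For $(x_b,x_d)$ and a control value $y$, $g(t,(x_b,x_d);y)=(f_{x_b},f_{x_d})$ with the same formulas. Region $R(t)=\{(x_b,x_d,y):0\le x_b\le b(t),\ 0\le x_d\le d(t),\ 0\le y\le s(t)\}$. Admissible controls are piecewise Lipschitz continuous $\sigma:[0,\infty)\to[0,1]$. Vector inequalities are componentwise. *)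

theory Defs
  imports "HOL-Analysis.Analysis"
begin

text \<open>Right-hand side f(t,w;sigma) for w = (x_b, x_d, y); b, d are the background
  solution, s = 1 - b - d.\<close>
definition fvec ::
  "real \<Rightarrow> real \<Rightarrow> real \<Rightarrow> (real \<Rightarrow> real) \<Rightarrow> (real \<Rightarrow> real) \<Rightarrow>
   real \<Rightarrow> real \<times> real \<times> real \<Rightarrow> real \<Rightarrow> real \<times> real \<times> real" where
  "fvec lam beta Gam b d t w sig =
     (let xb = fst w; xd = fst (snd w); y = snd (snd w); x = xb + xd;
          bt = b t; dt = d t; st = 1 - b t - d t
      in ( beta * xd + lam * (bt - xb) * (x + y),
           Gam * lam * (dt - xd) * y + Gam * lam * xd * st + lam * (dt - xd) * (x + y) - beta * xd,
           - Gam * lam * dt * y + lam * sig * (st - y) * (xb + y + (1 - Gam) * xd)))"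

definition gvec ::
  "real \<Rightarrow> real \<Rightarrow> real \<Rightarrow> (real \<Rightarrow> real) \<Rightarrow> (real \<Rightarrow> real) \<Rightarrow>
   real \<Rightarrow> real \<times> real \<Rightarrow> real \<Rightarrow> real \<times> real" where
  "gvec lam beta Gam b d t v y =
     (let xb = fst v; xd = snd v; x = xb + xd;
          bt = b t; dt = d t; st = 1 - b t - d t
      in ( beta * xd + lam * (bt - xb) * (x + y),
           Gam * lam * (dt - xd) * y + Gam * lam * xd * st + lam * (dt - xd) * (x + y) - beta * xd))"

definition in_R :: "(real \<Rightarrow> real) \<Rightarrow> (real \<Rightarrow> real) \<Rightarrow> real \<Rightarrow> real \<times> real \<times> real \<Rightarrow> bool" where
  "in_R b d t w \<longleftrightarrow>
     0 \<le> fst w \<and> fst w \<le> b t \<and> 0 \<le> fst (snd w) \<and> fst (snd w) \<le> d t \<and>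
     0 \<le> snd (snd w) \<and> snd (snd w) \<le> 1 - b t - d t"

definition vge3 :: "real \<times> real \<times> real \<Rightarrow> real \<times> real \<times> real \<Rightarrow> bool" where
  "vge3 u v \<longleftrightarrow> fst u \<ge> fst v \<and> fst (snd u) \<ge> fst (snd v) \<and> snd (snd u) \<ge> snd (snd v)"

definition vge2 :: "real \<times> real \<Rightarrow> real \<times> real \<Rightarrow> bool" where
  "vge2 u v \<longleftrightarrow> fst u \<ge> fst v \<and> snd u \<ge> snd v"

definition piecewise_lipschitz :: "(real \<Rightarrow> real) \<Rightarrow> bool" where
  "piecewise_lipschitz sig \<longleftrightarrow>
     (\<forall>T>0. \<exists>P. finite P \<and> P \<subseteq> {0..T} \<and> 0 \<in> P \<and> T \<in> P \<and>
        (\<forall>a\<in>P. \<forall>c\<in>P. a < c \<and> {a<..<c} \<inter> P = {} \<longrightarrow>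
            (\<exists>L. L-lipschitz_on {a<..<c} sig)))"

definition admissible :: "(real \<Rightarrow> real) \<Rightarrow> bool" where
  "admissible sig \<longleftrightarrow> piecewise_lipschitz sig \<and> (\<forall>t\<ge>0. 0 \<le> sig t \<and> sig t \<le> 1)"

text \<open>w solves w' = f(t,w;sigma(t)) on [0,\<infinity>): continuous, and the ODE holds
  except on a countable set (the switching points of the control).\<close>
definition solves_f ::
  "real \<Rightarrow> real \<Rightarrow> real \<Rightarrow> (real \<Rightarrow> real) \<Rightarrow> (real \<Rightarrow> real) \<Rightarrow>
   (real \<Rightarrow> real) \<Rightarrow> (real \<Rightarrow> real \<times> real \<times> real) \<Rightarrow> bool" where
  "solves_f lam beta Gam b d sig w \<longleftrightarrow>
     continuous_on {0..} w \<and>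
     (\<exists>S. countable S \<and>
        (\<forall>t\<in>{0..} - S. (w has_vector_derivative fvec lam beta Gam b d t (w t) (sig t))
                           (at t within {0..})))"

definition solves_g ::
  "real \<Rightarrow> real \<Rightarrow> real \<Rightarrow> (real \<Rightarrow> real) \<Rightarrow> (real \<Rightarrow> real) \<Rightarrow>
   (real \<Rightarrow> real) \<Rightarrow> (real \<Rightarrow> real \<times> real) \<Rightarrow> bool" where
  "solves_g lam beta Gam b d y v \<longleftrightarrow>
     (\<forall>t\<ge>0. (v has_vector_derivative gvec lam beta Gam b d t (v t) (y t)) (at t within {0..}))"

end

theory Submission
  imports Defs
begin


lemma pos_inv:
  fixes q q' :: "nat \<Rightarrow> real \<Rightarrow> real" and K T :: real
  assumes cont: "\<And>i. i<n \<Longrightarrow> continuous_on {0..T} (q i)"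
   and cS: "countable S"
   and der: "\<And>t i. t \<in> {0..T} \<Longrightarrow> t \<notin> S \<Longrightarrow> i < n \<Longrightarrow> (q i has_real_derivative q' i t) (at t within {0..T})"
   and init: "\<And>i. i<n \<Longrightarrow> q i 0 \<ge> 0"
   and coop: "\<And>t i N. t \<in> {0..T} \<Longrightarrow> t \<notin> S \<Longrightarrow> i < n \<Longrightarrow> q i t < 0 \<Longrightarrow> N \<ge> 0 \<Longrightarrow> (\<And>j. j<n \<Longrightarrow> q j t \<ge> -N) \<Longrightarrow> q' i t \<ge> -K*N"
   and i: "i<n" and t: "0 \<le> t" "t \<le> T"
  shows "q i t \<ge> 0"
proof (rule ccontr)
  assume neg: "\<not> q i t \<ge> 0"
  define L where "L = \<bar>K\<bar> + 1"
  have L: "L > 0" "L > K" unfolding L_def by auto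
  define p where "p e i t = q i t + e * exp (L*t)" for e i t
  define Bad where "Bad e = {t \<in> {0..T}. \<exists>i<n. p e i t \<le> 0}" for e
  define tau where "tau e = Inf (Bad e)" for e
  have contp: "continuous_on {0..T} (p e j)" if "j<n" for e j
    unfolding p_def by (intro continuous_intros cont that)
  have bdd: "bdd_below (Bad e)" for e unfolding Bad_def by (rule bdd_belowI[of _ 0]) auto
  have claim1: "tau e \<in> Bad e \<and> (\<forall>s. 0 \<le> s \<and> s < tau e \<longrightarrow> (\<forall>j<n. p e j s > 0))
      \<and> (\<forall>j<n. p e j (tau e) \<ge> 0) \<and> tau e > 0"
    if e: "e > 0" and ne: "Bad e \<noteq> {}" for e
  proof -
    have "Bad e = (\<Union>j\<in>{..<n}. {s \<in> {0..T}. p e j s \<le> (\<lambda>_. 0) s})"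
      unfolding Bad_def by auto
    moreover have "closed {s \<in> {0..T}. p e j s \<le> (\<lambda>_. 0) s}" if "j<n" for j
      by (rule continuous_on_closed_Collect_le) (auto intro: contp that)
    ultimately have cl: "closed (Bad e)" by auto
    have tin: "tau e \<in> Bad e" unfolding tau_def using closed_contains_Inf[OF ne bdd cl] .
    have below: "\<forall>j<n. p e j s > 0" if "0 \<le> s" "s < tau e" for s
    proof -
      have "s \<notin> Bad e" using cInf_lower[OF _ bdd, of s] that unfolding tau_def by force
      moreover have "s \<le> T" using tin that unfolding Bad_def by auto
      ultimately show ?thesis using that unfolding Bad_def by force
    qed
    have p0: "p e j 0 > 0" if "j<n" for j using init[OF that] e unfolding p_def by simp
    have tpos: "tau e > 0"
    proof -
      have "tau e \<ge> 0" using tin unfolding Bad_def by auto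
      moreover have "tau e \<noteq> 0" using tin p0 unfolding Bad_def by force
      ultimately show ?thesis by auto
    qed
    have "p e j (tau e) \<ge> 0" if j: "j<n" for j
    proof (rule ccontr)
      assume "\<not> p e j (tau e) \<ge> 0"
      hence "p e j (tau e) \<le> 0" "0 \<le> p e j 0" using p0[OF j] by auto
      moreover have "continuous_on {0..tau e} (p e j)"
        using tin unfolding Bad_def by (intro continuous_on_subset[OF contp[OF j]]) auto
      ultimately obtain x where x: "0 \<le> x" "x \<le> tau e" "p e j x = 0"
        using IVT2'[of "p e j" "tau e" 0 0] tpos by auto
      show False
      proof (cases "x = tau e")
        case True thus False using x \<open>\<not> p e j (tau e) \<ge> 0\<close> by simp
      next
        case False thus False using below[of x] x j by auto
      qed
    qed
    thus ?thesis using tin below tpos by blast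
  qed
  have claim2: "tau e \<in> S" if e: "e > 0" and ne: "Bad e \<noteq> {}" for e
  proof (rule ccontr)
    assume nS: "tau e \<notin> S"
    define \<tau> where "\<tau> = tau e"
    note c1 = claim1[OF e ne, folded \<tau>_def]
    obtain k where k: "k<n" "p e k \<tau> \<le> 0" "\<tau> \<in> {0..T}" using c1 unfolding Bad_def by auto
    define N where "N = e * exp (L*\<tau>)"
    have Npos: "N > 0" unfolding N_def using e by simp
    have qj: "q j \<tau> \<ge> -N" if "j<n" for j using c1 that unfolding p_def N_def by force
    have qk: "q k \<tau> < 0" using k Npos unfolding p_def N_def by simp
    have q'k: "q' k \<tau> \<ge> -K*N"
      using coop[OF k(3) nS[folded \<tau>_def] k(1) qk, of N] Npos qj by auto
    have dp: "(p e k has_real_derivative (q' k \<tau> + e * (exp (L*\<tau>) * L))) (at \<tau> within {0..T})"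
      unfolding p_def
      by (auto intro!: derivative_eq_intros der[OF k(3) nS[folded \<tau>_def] k(1)])
    have "q' k \<tau> + e * (exp (L*\<tau>) * L) = q' k \<tau> + L*N" unfolding N_def by simp
    also have "\<dots> > 0"
    proof -
      have "L*N - K*N = (L-K)*N" by (simp add: algebra_simps)
      moreover have "(L-K)*N > 0" using L Npos by simp
      ultimately show ?thesis using q'k by linarith
    qed
    finally have "q' k \<tau> + e * (exp (L*\<tau>) * L) > 0" .
    from has_real_derivative_pos_inc_left[OF dp this]
    obtain d where d: "d>0" "\<forall>h>0. \<tau> - h \<in> {0..T} \<longrightarrow> h < d \<longrightarrow> p e k (\<tau> - h) < p e k \<tau>" by blast
    define h where "h = min (d/2) (\<tau>/2)"
    have h: "h > 0" "h < d" "\<tau> - h \<in> {0..T}" "0 \<le> \<tau> - h" "\<tau> - h < \<tau>"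
      using d c1 k(3) unfolding h_def \<tau>_def by auto
    have "p e k (\<tau> - h) < 0" using d h k by force
    moreover have "p e k (\<tau> - h) > 0" using c1 h k by auto
    ultimately show False by simp
  qed
  have claim3: "Bad e1 \<noteq> {} \<and> tau e1 < tau e2" if e: "0 < e1" "e1 < e2" and ne: "Bad e2 \<noteq> {}" for e1 e2
  proof -
    note c2 = claim1[OF _ ne] 
    have e2: "e2 > 0" using e by simp
    obtain k where k: "k<n" "p e2 k (tau e2) \<le> 0" "tau e2 \<in> {0..T}" using c2[OF e2] unfolding Bad_def by auto
    have "p e1 k (tau e2) < p e2 k (tau e2)" using e unfolding p_def by simp
    hence lt: "p e1 k (tau e2) < 0" using k by simp
    hence inb: "tau e2 \<in> Bad e1" using k unfolding Bad_def by force
    hence ne1: "Bad e1 \<noteq> {}" by auto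
    have le: "tau e1 \<le> tau e2" unfolding tau_def using cInf_lower[OF inb bdd] by (simp add: tau_def)
    have "tau e1 \<noteq> tau e2" using claim1[OF e(1) ne1] lt k(1) by force
    thus ?thesis using le ne1 by simp
  qed
  define E where "E = {e \<in> {0<..<1}. Bad e \<noteq> {}}"
  have injE: "inj_on tau E"
  proof (rule inj_onI)
    fix x y assume "x \<in> E" "y \<in> E" "tau x = tau y"
    hence "x > 0" "y > 0" "Bad x \<noteq> {}" "Bad y \<noteq> {}" unfolding E_def by auto
    show "x = y"
    proof (rule ccontr)
      assume "x \<noteq> y"
      hence "x < y \<or> y < x" by auto
      thus False using claim3[of x y] claim3[of y x] \<open>x > 0\<close> \<open>y > 0\<close> \<open>Bad x \<noteq> {}\<close> \<open>Bad y \<noteq> {}\<close> \<open>tau x = tau y\<close> by auto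
    qed
  qed
  have "tau ` E \<subseteq> S" using claim2 unfolding E_def by auto
  hence "countable (tau ` E)" using cS countable_subset by blast
  hence cE: "countable E" using countable_image_inj_on injE by blast
  define \<delta> where "\<delta> = - q i t / exp (L*t)"
  have dpos: "\<delta> > 0" using neg unfolding \<delta>_def by (simp add: divide_neg_pos)
  have "uncountable {0<..<min 1 \<delta>}" using dpos by (simp add: uncountable_open_interval)
  hence "\<not> {0<..<min 1 \<delta>} \<subseteq> E" using cE countable_subset by metis
  then obtain e where e: "e \<in> {0<..<min 1 \<delta>}" "e \<notin> E" by (meson subsetI)
  have "p e i t < 0"
  proof -
    have "e * exp (L*t) < \<delta> * exp (L*t)" using e by simp
    also have "\<dots> = - q i t" unfolding \<delta>_def by simp
    finally show ?thesis unfolding p_def by simp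
  qed
  hence "t \<in> Bad e" using t i unfolding Bad_def by force
  hence "Bad e \<noteq> {}" by blast
  moreover have "e \<in> {0<..<1}" using e(1) by simp
  ultimately have "e \<in> E" unfolding E_def by blast
  thus False using e(2) by contradiction
qed



lemma H1: fixes u c M N :: real
  assumes "u < 0" "u \<ge> -N" "\<bar>c\<bar> \<le> M" shows "u*c \<ge> -(M*N)"
proof -
  have "\<bar>u*c\<bar> \<le> N*M" unfolding abs_mult using assms by (intro mult_mono) auto
  thus ?thesis by (auto simp: algebra_simps)
qed

lemma H2: fixes u v M N a b :: real
  assumes "\<bar>u\<bar> \<le> M" "\<bar>v\<bar> \<le> M" "u \<ge> -(a*N)" "v \<ge> -(b*N)" "a \<ge> 0" "b \<ge> 0" "N \<ge> 0"
  shows "u* v \<ge> -(M*((a+b)*N))"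
proof -
  have M: "M \<ge> 0" using assms(1) by linarith
  consider "u \<ge> 0" "v \<ge> 0" | "u \<ge> 0" "v < 0" | "u < 0" "v \<ge> 0" | "u < 0" "v < 0" by linarith
  thus ?thesis
  proof cases
    case 1
    have "u* v \<ge> 0" using 1 by simp
    moreover have "M*((a+b)*N) \<ge> 0" using M assms by simp
    ultimately show ?thesis by linarith
  next
    case 2
    have "u*(-v) \<le> M*(b*N)" using assms 2 by (intro mult_mono) auto
    moreover have "M*(a*N) \<ge> 0" using M assms by simp
    ultimately show ?thesis by (simp add: algebra_simps)
  next
    case 3
    have "(-u)* v \<le> (a*N)*M" using assms 3 by (intro mult_mono) auto
    moreover have "M*(b*N) \<ge> 0" using M assms by simp
    ultimately show ?thesis by (simp add: algebra_simps)
  next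
    case 4 
    have "u* v > 0" using 4 by (simp add: mult_neg_neg)
    moreover have "M*((a+b)*N) \<ge> 0" using M assms by simp
    ultimately show ?thesis by linarith
  qed
qed

lemma scale: fixes c x K :: real assumes "0 \<le> c" "c \<le> C" "x \<ge> -K" "K \<ge> 0" shows "c*x \<ge> -(C*K)"
proof -
  have "c*x \<ge> c*(-K)" using assms by (intro mult_left_mono) auto
  moreover have "c*K \<le> C*K" using assms by (simp add: mult_right_mono)
  ultimately show ?thesis by simp
qed

lemma H4: fixes c x M :: real assumes "0 \<le> c" "c \<le> 1" "\<bar>x\<bar> \<le> M" shows "\<bar>c*x\<bar> \<le> M"
proof -
  have "\<bar>c*x\<bar> = c*\<bar>x\<bar>" using assms by (simp add: abs_mult)
  also have "\<dots> \<le> \<bar>x\<bar>" using assms by (intro mult_left_le_one_le) auto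
  finally show ?thesis using assms by simp
qed



locale alg =
  fixes l \<beta> G M N :: real
  assumes l: "l > 0" and \<beta>: "\<beta> > 0" and G: "G > 0" "G \<le> 1" and N: "N \<ge> 0" and M: "M \<ge> 0"
begin

abbreviation "K \<equiv> \<beta> + 20*l*M"

lemma lMN: "l*M*N \<ge> 0" using l M N by simp

lemma inv_xb:
  assumes "\<bar>b - A\<bar> \<le> M" "\<bar>A\<bar> \<le> M" "\<bar>C\<bar> \<le> M" "\<bar>Y\<bar> \<le> M"
    "A \<ge> -N" "b - A \<ge> -N" "C \<ge> -N" "Y \<ge> -N"
  shows "\<beta>*C + l*(b-A)*((A+C)+Y) \<ge> -(K*N)"
proof -
  have h1: "\<beta>*C \<ge> -(\<beta>*N)" by (rule scale) (use \<beta> N assms in auto)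
  have h2: "(b-A)*((A+C)+Y) \<ge> -((3*M)*((1+3)*N))"
    by (rule H2) (use assms M N in auto)
  have h3: "l*((b-A)*((A+C)+Y)) \<ge> -(l*((3*M)*((1+3)*N)))"
    by (rule scale) (use h2 l M N in auto)
  show ?thesis using h1 h3 lMN by (simp add: algebra_simps)
qed

lemma inv_b:
  assumes "\<bar>b - A\<bar> \<le> M" "\<bar>A\<bar> \<le> M" "\<bar>C\<bar> \<le> M" "\<bar>Y\<bar> \<le> M"
    "b - A < 0" "b - A \<ge> -N" "d - C \<ge> -N"
  shows "\<beta>*d - (\<beta>*C + l*(b-A)*((A+C)+Y)) \<ge> -(K*N)"
proof -
  have h1: "\<beta>*(d-C) \<ge> -(\<beta>*N)" by (rule scale) (use \<beta> N assms in auto)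
  have h2: "(b-A)*(-((A+C)+Y)) \<ge> -((3*M)*N)"
    by (rule H1) (use assms M N in auto)
  have h3: "l*((b-A)*(-((A+C)+Y))) \<ge> -(l*((3*M)*N))"
    by (rule scale) (use h2 l M N in auto)
  show ?thesis using h1 h3 lMN by (simp add: algebra_simps)
qed

lemma inv_xd:
  assumes "\<bar>d - C\<bar> \<le> M" "\<bar>A\<bar> \<le> M" "\<bar>C\<bar> \<le> M" "\<bar>Y\<bar> \<le> M" "\<bar>s\<bar> \<le> M"
    "A \<ge> -N" "d - C \<ge> -N" "C \<ge> -N" "Y \<ge> -N" "C < 0"
  shows "G*l*(d-C)*Y + G*l*C* s + l*(d-C)*((A+C)+Y) - \<beta>*C \<ge> -(K*N)"
proof -
  have GL: "0 \<le> G*l" "G*l \<le> l" using G l by auto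
  have h1: "(d-C)*Y \<ge> -(M*((1+1)*N))" by (rule H2) (use assms M N in auto)
  have h1b: "(G*l)*((d-C)*Y) \<ge> -(l*(M*((1+1)*N)))" by (rule scale) (use h1 GL M N in auto)
  have h2: "C* s \<ge> -(M*N)" by (rule H1) (use assms in auto)
  have h2b: "(G*l)*(C* s) \<ge> -(l*(M*N))" by (rule scale) (use h2 GL M N in auto)
  have h3: "(d-C)*((A+C)+Y) \<ge> -((3*M)*((1+3)*N))" by (rule H2) (use assms M N in auto)
  have h3b: "l*((d-C)*((A+C)+Y)) \<ge> -(l*((3*M)*((1+3)*N)))" by (rule scale) (use h3 l M N in auto)
  have h4: "\<beta>*C \<le> 0" using \<beta> assms by (intro mult_nonneg_nonpos) auto
  have h5: "\<beta>*N \<ge> 0" using \<beta> N by simp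
  show ?thesis using h1b h2b h3b h4 h5 lMN by (simp add: algebra_simps)
qed

lemma inv_d:
  assumes "\<bar>d - C\<bar> \<le> M" "\<bar>A\<bar> \<le> M" "\<bar>C\<bar> \<le> M" "\<bar>Y\<bar> \<le> M" "\<bar>s\<bar> \<le> M"
    "d - C \<ge> -N" "d - C < 0"
  shows "(- \<beta>*d + l*G*d* s) - (G*l*(d-C)*Y + G*l*C* s + l*(d-C)*((A+C)+Y) - \<beta>*C) \<ge> -(K*N)"
proof -
  have eq: "(- \<beta>*d + l*G*d* s) - (G*l*(d-C)*Y + G*l*C* s + l*(d-C)*((A+C)+Y) - \<beta>*C)
      = (d-C)*(-\<beta> + l*G* s - G*l*Y - l*((A+C)+Y))" by (simp add: algebra_simps)
  have b1: "\<bar>l*G* s\<bar> \<le> l*M" using assms l G by (simp add: abs_mult mult_le_one mult_mono)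
  have b2: "\<bar>G*l*Y\<bar> \<le> l*M" using assms l G by (simp add: abs_mult mult_le_one mult_mono)
  have b3: "\<bar>l*((A+C)+Y)\<bar> \<le> l*(3*M)" using assms l by (simp add: abs_mult mult_left_mono)
  have "\<bar>-\<beta> + l*G* s - G*l*Y - l*((A+C)+Y)\<bar> \<le> \<beta> + 5*l*M" using b1 b2 b3 \<beta> by (simp add: abs_le_iff)
  hence "(d-C)*(-\<beta> + l*G* s - G*l*Y - l*((A+C)+Y)) \<ge> -((\<beta> + 5*l*M)*N)"
    by (intro H1) (use assms in auto)
  thus ?thesis using eq lMN by (simp add: algebra_simps)
qed


lemma inv_y:
  assumes "\<bar>d\<bar> \<le> M" "\<bar>A\<bar> \<le> M" "\<bar>C\<bar> \<le> M" "\<bar>Y\<bar> \<le> M" "\<bar>s - Y\<bar> \<le> M"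
    "A \<ge> -N" "C \<ge> -N" "Y \<ge> -N" "s - Y \<ge> -N" "Y < 0" "0 \<le> \<sigma>" "\<sigma> \<le> 1"
  shows "- G*l*d*Y + l*\<sigma>*(s - Y)*(A + Y + (1-G)*C) \<ge> -(K*N)"
proof -
  have GL: "0 \<le> G*l" "G*l \<le> l" using G l by auto
  have h1: "Y*(-d) \<ge> -(M*N)" by (rule H1) (use assms in auto)
  have h1b: "(G*l)*(Y*(-d)) \<ge> -(l*(M*N))" by (rule scale) (use h1 GL M N in auto)
  have h2: "\<sigma>*(s-Y) \<ge> -(1*N)" by (rule scale) (use assms N in auto)
  have h2a: "\<bar>\<sigma>*(s-Y)\<bar> \<le> M" using assms by (intro H4) auto
  have h3: "(1-G)*C \<ge> -(1*N)" by (rule scale) (use assms N G in auto)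
  have h3a: "\<bar>(1-G)*C\<bar> \<le> M" using assms G by (intro H4) auto
  have h4: "(\<sigma>*(s-Y))*(A + Y + (1-G)*C) \<ge> -((3*M)*((1+3)*N))"
    by (rule H2) (use assms M N h2 h2a h3 h3a in auto)
  have h4b: "l*((\<sigma>*(s-Y))*(A + Y + (1-G)*C)) \<ge> -(l*((3*M)*((1+3)*N)))"
    by (rule scale) (use h4 l M N in auto)
  have h5: "\<beta>*N \<ge> 0" using \<beta> N by simp
  show ?thesis using h1b h4b h5 lMN by (simp add: algebra_simps)
qed

lemma inv_s:
  assumes "\<bar>d\<bar> \<le> M" "\<bar>A\<bar> \<le> M" "\<bar>C\<bar> \<le> M" "\<bar>Y\<bar> \<le> M" 
    "s - Y \<ge> -N" "s - Y < 0" "0 \<le> \<sigma>" "\<sigma> \<le> 1"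
  shows "(s - Y) * (- l*G*d - l*\<sigma>*(A + Y + (1-G)*C)) \<ge> -(K*N)"
proof -
  have b1: "\<bar>l*G*d\<bar> \<le> l*M" using assms l G by (simp add: abs_mult mult_le_one mult_mono)
  have h3a: "\<bar>(1-G)*C\<bar> \<le> M" using assms G by (intro H4) auto
  have "\<bar>A + Y + (1-G)*C\<bar> \<le> 3*M" using assms h3a by linarith
  hence b2: "\<bar>l*\<sigma>*(A + Y + (1-G)*C)\<bar> \<le> l*(3*M)" using assms l
    by (simp add: abs_mult mult_le_one mult_mono)
  have "\<bar>- l*G*d - l*\<sigma>*(A + Y + (1-G)*C)\<bar> \<le> \<beta> + 5*l*M" using b1 b2 \<beta> by (simp add: abs_le_iff)
  hence "(s - Y) * (- l*G*d - l*\<sigma>*(A + Y + (1-G)*C)) \<ge> -((\<beta> + 5*l*M)*N)"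
    by (intro H1) (use assms in auto)
  thus ?thesis using lMN by (simp add: algebra_simps)
qed

lemma cmp_xb:
  assumes "0 \<le> b - A1" "b - A1 \<le> M" "A1 - A2 < 0" "A1 - A2 \<ge> -N" "C1 - C2 \<ge> -N" "Y1 - Y2 \<ge> -N"
    "A2 + C2 + Y2 \<ge> 0"
  shows "(\<beta>*C1 + l*(b-A1)*((A1+C1)+Y1)) - (\<beta>*C2 + l*(b-A2)*((A2+C2)+Y2)) \<ge> -(K*N)"
proof -
  have eq: "(\<beta>*C1 + l*(b-A1)*((A1+C1)+Y1)) - (\<beta>*C2 + l*(b-A2)*((A2+C2)+Y2))
     = \<beta>*(C1-C2) + l*((b-A1)*((A1-A2)+(C1-C2)+(Y1-Y2)) - (A1-A2)*((A2+C2)+Y2))"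
    by (simp add: algebra_simps)
  have h1: "\<beta>*(C1-C2) \<ge> -(\<beta>*N)" by (rule scale) (use \<beta> N assms in auto)
  have h2: "(b-A1)*((A1-A2)+(C1-C2)+(Y1-Y2)) \<ge> -(M*(3*N))" by (rule scale) (use assms N in auto)
  have h3: "(A1-A2)*((A2+C2)+Y2) \<le> 0" using assms by (intro mult_nonpos_nonneg) auto
  have h4: "l*((b-A1)*((A1-A2)+(C1-C2)+(Y1-Y2)) - (A1-A2)*((A2+C2)+Y2)) \<ge> -(l*(M*(3*N)))"
    by (rule scale) (use h2 h3 l M N in auto)
  show ?thesis unfolding eq using h1 h4 lMN by (simp add: algebra_simps)
qed

lemma cmp_xd:
  assumes "0 \<le> d - C1" "d - C1 \<le> M" "0 \<le> s" "s \<le> M" "C1 - C2 < 0" "A1 - A2 \<ge> -N" "C1 - C2 \<ge> -N" "Y1 - Y2 \<ge> -N"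
    "A2 + C2 + Y2 \<ge> 0" "Y2 \<ge> 0"
  shows "(G*l*(d-C1)*Y1 + G*l*C1* s + l*(d-C1)*((A1+C1)+Y1) - \<beta>*C1)
       - (G*l*(d-C2)*Y2 + G*l*C2* s + l*(d-C2)*((A2+C2)+Y2) - \<beta>*C2) \<ge> -(K*N)"
proof -
  have eq: "(G*l*(d-C1)*Y1 + G*l*C1* s + l*(d-C1)*((A1+C1)+Y1) - \<beta>*C1)
       - (G*l*(d-C2)*Y2 + G*l*C2* s + l*(d-C2)*((A2+C2)+Y2) - \<beta>*C2)
     = (G*l)*((d-C1)*(Y1-Y2) - (C1-C2)*Y2 + s*(C1-C2))
       + l*((d-C1)*((A1-A2)+(C1-C2)+(Y1-Y2)) - (C1-C2)*((A2+C2)+Y2)) - \<beta>*(C1-C2)"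
    by (simp add: algebra_simps)
  have GL: "0 \<le> G*l" "G*l \<le> l" using G l by auto
  have h1: "(d-C1)*(Y1-Y2) \<ge> -(M*N)" by (rule scale) (use assms N in auto)
  have h1a: "(C1-C2)*Y2 \<le> 0" using assms by (intro mult_nonpos_nonneg) auto
  have h1c: "s*(C1-C2) \<ge> -(M*N)" by (rule scale) (use assms N in auto)
  have h1b: "(G*l)*((d-C1)*(Y1-Y2) - (C1-C2)*Y2 + s*(C1-C2)) \<ge> -(l*(2*(M*N)))"
    by (rule scale) (use h1 h1a h1c GL M N in auto)
  have h2: "(d-C1)*((A1-A2)+(C1-C2)+(Y1-Y2)) \<ge> -(M*(3*N))" by (rule scale) (use assms N in auto)
  have h3: "(C1-C2)*((A2+C2)+Y2) \<le> 0" using assms by (intro mult_nonpos_nonneg) auto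
  have h4: "l*((d-C1)*((A1-A2)+(C1-C2)+(Y1-Y2)) - (C1-C2)*((A2+C2)+Y2)) \<ge> -(l*(M*(3*N)))"
    by (rule scale) (use h2 h3 l M N in auto)
  have h5: "\<beta>*(C1-C2) \<le> 0" using \<beta> assms by (intro mult_nonneg_nonpos) auto
  have h6: "\<beta>*N \<ge> 0" using \<beta> N by simp
  show ?thesis unfolding eq using h1b h4 h5 h6 lMN by (simp add: algebra_simps)
qed

lemma cmp_y:
  assumes "0 \<le> d" "0 \<le> s - Y1" "s - Y1 \<le> M" "Y1 - Y2 < 0" "A1 - A2 \<ge> -N" "C1 - C2 \<ge> -N" "Y1 - Y2 \<ge> -N"
    "A1 + Y1 + (1-G)*C1 \<ge> 0" "A2 + Y2 + (1-G)*C2 \<ge> 0" "0 \<le> \<sigma>2" "\<sigma>2 \<le> 1" "\<sigma>2 \<le> \<sigma>1"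
  shows "(- G*l*d*Y1 + l*\<sigma>1*(s - Y1)*(A1 + Y1 + (1-G)*C1))
       - (- G*l*d*Y2 + l*\<sigma>2*(s - Y2)*(A2 + Y2 + (1-G)*C2)) \<ge> -(K*N)"
proof -
  have eq: "(- G*l*d*Y1 + l*\<sigma>1*(s - Y1)*(A1 + Y1 + (1-G)*C1))
       - (- G*l*d*Y2 + l*\<sigma>2*(s - Y2)*(A2 + Y2 + (1-G)*C2))
     = - ((G*l*d)*(Y1-Y2)) + l*((\<sigma>1-\<sigma>2)*(s-Y1)*(A1 + Y1 + (1-G)*C1)
         + \<sigma>2*((s-Y1)*((A1-A2)+(Y1-Y2)+(1-G)*(C1-C2)) - (Y1-Y2)*(A2 + Y2 + (1-G)*C2)))"
    by (simp add: algebra_simps)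
  have h0: "(G*l*d)*(Y1-Y2) \<le> 0" using assms G l by (intro mult_nonneg_nonpos) auto
  have h1: "(\<sigma>1-\<sigma>2)*(s-Y1)*(A1 + Y1 + (1-G)*C1) \<ge> 0" using assms by simp
  have h2a: "(1-G)*(C1-C2) \<ge> -(1*N)" by (rule scale) (use assms G N in auto)
  have h2: "(s-Y1)*((A1-A2)+(Y1-Y2)+(1-G)*(C1-C2)) \<ge> -(M*(3*N))" by (rule scale) (use assms N h2a in auto)
  have h3: "(Y1-Y2)*(A2 + Y2 + (1-G)*C2) \<le> 0" using assms by (intro mult_nonpos_nonneg) auto
  have h4: "\<sigma>2*((s-Y1)*((A1-A2)+(Y1-Y2)+(1-G)*(C1-C2)) - (Y1-Y2)*(A2 + Y2 + (1-G)*C2)) \<ge> -(1*(M*(3*N)))"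
    by (rule scale) (use h2 h3 assms M N in auto)
  have h5: "l*((\<sigma>1-\<sigma>2)*(s-Y1)*(A1 + Y1 + (1-G)*C1)
         + \<sigma>2*((s-Y1)*((A1-A2)+(Y1-Y2)+(1-G)*(C1-C2)) - (Y1-Y2)*(A2 + Y2 + (1-G)*C2))) \<ge> -(l*(M*(3*N)))"
    by (rule scale) (use h1 h4 l M N in auto)
  have h6: "\<beta>*N \<ge> 0" using \<beta> N by simp
  show ?thesis unfolding eq using h0 h5 h6 lMN by (simp add: algebra_simps)
qed

end


lemma vd_fst: "(f has_vector_derivative D) F \<Longrightarrow> ((\<lambda>x. fst (f x)) has_real_derivative fst D) F"
  unfolding has_real_derivative_iff_has_vector_derivative has_vector_derivative_def
  by (drule has_derivative_fst) simp

lemma vd_snd: "(f has_vector_derivative D) F \<Longrightarrow> ((\<lambda>x. snd (f x)) has_vector_derivative snd D) F"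
  unfolding has_vector_derivative_def
  by (drule has_derivative_snd) simp

lemma vd_snd_r: "(f has_vector_derivative D) F \<Longrightarrow> ((\<lambda>x. snd (f x)) has_real_derivative snd D) F"
  unfolding has_real_derivative_iff_has_vector_derivative by (rule vd_snd)

lemma bnd: fixes f :: "real \<Rightarrow> 'a::real_normed_vector"
  assumes "continuous_on {0..T} f" shows "\<exists>B\<ge>0. \<forall>t\<in>{0..T}. norm (f t) \<le> B"
proof -
  have "bounded (f ` {0..T})" by (rule compact_imp_bounded[OF compact_continuous_image[OF assms compact_Icc]])
  then obtain B where "\<forall>x\<in>f ` {0..T}. norm x \<le> B" by (auto simp: bounded_iff)
  thus ?thesis by (intro exI[of _ "max B 0"]) auto
qed

lemma less6: "(i::nat) < 6 \<Longrightarrow> P 0 \<Longrightarrow> P 1 \<Longrightarrow> P 2 \<Longrightarrow> P 3 \<Longrightarrow> P 4 \<Longrightarrow> P 5 \<Longrightarrow> P i"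
proof -
  assume "i < 6" "P 0" "P 1" "P 2" "P 3" "P 4" "P 5"
  moreover have "i = 0 \<or> i = 1 \<or> i = 2 \<or> i = 3 \<or> i = 4 \<or> i = 5" using \<open>i<6\<close> by arith
  ultimately show "P i" by auto
qed

lemma nth6: "[a,b,c,d,e,f]!0 = a" "[a,b,c,d,e,f]!1 = b" "[a,b,c,d,e,f]!2 = c"
  "[a,b,c,d,e,f]!3 = d" "[a,b,c,d,e,f]!4 = e" "[a,b,c,d,e,f]!5 = f" by simp_all

lemma nth3: "[a,b,c]!0 = a" "[a,b,c]!1 = b" "[a,b,c]!2 = c" by simp_all

lemma less4: "(i::nat) < 4 \<Longrightarrow> P 0 \<Longrightarrow> P 1 \<Longrightarrow> P 2 \<Longrightarrow> P 3 \<Longrightarrow> P i"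
proof -
  assume "i < 4" "P 0" "P 1" "P 2" "P 3"
  moreover have "i = 0 \<or> i = 1 \<or> i = 2 \<or> i = 3" using \<open>i<4\<close> by arith
  ultimately show "P i" by auto
qed

lemma less3: "(i::nat) < 3 \<Longrightarrow> P 0 \<Longrightarrow> P 1 \<Longrightarrow> P 2 \<Longrightarrow> P i"
proof -
  assume "i < 3" "P 0" "P 1" "P 2"
  moreover have "i = 0 \<or> i = 1 \<or> i = 2" using \<open>i<3\<close> by arith
  ultimately show "P i" by auto
qed

lemma less2: "(i::nat) < 2 \<Longrightarrow> P 0 \<Longrightarrow> P 1 \<Longrightarrow> P i"
proof -
  assume "i < 2" "P 0" "P 1"
  moreover have "i = 0 \<or> i = 1" using \<open>i<2\<close> by arith
  ultimately show "P i" by auto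
qed

lemma nth4: "[a,b,c,d]!0 = a" "[a,b,c,d]!1 = b" "[a,b,c,d]!2 = c" "[a,b,c,d]!3 = d" by simp_all

lemma nth2: "[a,b]!0 = a" "[a,b]!1 = b" by simp_all

lemma norm3: fixes w :: "real \<times> real \<times> real"
  shows "\<bar>fst w\<bar> \<le> norm w" "\<bar>fst (snd w)\<bar> \<le> norm w" "\<bar>snd (snd w)\<bar> \<le> norm w"
proof -
  obtain a c y where w: "w = (a,c,y)" by (cases w) auto
  have "norm (c,y) \<le> norm w" using norm_snd_le[of "(c,y)" a] w by simp
  thus "\<bar>fst w\<bar> \<le> norm w" "\<bar>fst (snd w)\<bar> \<le> norm w" "\<bar>snd (snd w)\<bar> \<le> norm w"
    using norm_fst_le[of a "(c,y)"] norm_fst_le[of c y] norm_snd_le[of y c] w by auto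
qed



lemma inv_a:
  fixes lam beta Gam :: real and b d sig :: "real \<Rightarrow> real" and w :: "real \<Rightarrow> real \<times> real \<times> real"
  assumes p: "lam > 0" "beta > 0" "0 < Gam" "Gam \<le> 1"
   and bd: "\<forall>t\<ge>0. (b has_real_derivative beta * d t) (at t within {0..})"
   and dd: "\<forall>t\<ge>0. (d has_real_derivative (- beta * d t + lam * Gam * d t * (1 - b t - d t))) (at t within {0..})"
   and sig: "\<forall>t\<ge>0. 0 \<le> sig t \<and> sig t \<le> 1"
   and sol: "solves_f lam beta Gam b d sig w"
   and R0: "in_R b d 0 (w 0)"
   and t: "0 \<le> t"
  shows "in_R b d t (w t)"
proof -
  from sol obtain S where cw: "continuous_on {0..} w" and cS: "countable S"
    and dw: "\<And>t. t \<in> {0..} - S \<Longrightarrow> (w has_vector_derivative fvec lam beta Gam b d t (w t) (sig t)) (at t within {0..})"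
    unfolding solves_f_def by blast
  have cb: "continuous_on {0..} b" by (rule DERIV_continuous_on) (use bd in auto)
  have cd: "continuous_on {0..} d" by (rule DERIV_continuous_on) (use dd in auto)
  define T where "T = t"
  have sub: "{0..T} \<subseteq> {0..}" by auto
  obtain B1 where B1: "B1 \<ge> 0" "\<forall>t\<in>{0..T}. norm (w t) \<le> B1" using bnd[OF continuous_on_subset[OF cw sub]] by blast
  obtain B2 where B2: "B2 \<ge> 0" "\<forall>t\<in>{0..T}. norm (b t) \<le> B2" using bnd[OF continuous_on_subset[OF cb sub]] by blast
  obtain B3 where B3: "B3 \<ge> 0" "\<forall>t\<in>{0..T}. norm (d t) \<le> B3" using bnd[OF continuous_on_subset[OF cd sub]] by blast
  define M where "M = 3*(B1+B2+B3) + 1"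
  have M0: "M \<ge> 0" unfolding M_def using B1 B2 B3 by simp
  define F where "F = (\<lambda>t. fvec lam beta Gam b d t (w t) (sig t))"
  define q where "q = (\<lambda>i. [\<lambda>t. fst (w t), \<lambda>t. b t - fst (w t), \<lambda>t. fst (snd (w t)), \<lambda>t. d t - fst (snd (w t)),
      \<lambda>t. snd (snd (w t)), \<lambda>t. 1 - b t - d t - snd (snd (w t))] ! i)"
  define q' where "q' = (\<lambda>i t. [fst (F t), beta * d t - fst (F t), fst (snd (F t)),
      (- beta * d t + lam * Gam * d t * (1 - b t - d t)) - fst (snd (F t)), snd (snd (F t)),
      0 - beta * d t - (- beta * d t + lam * Gam * d t * (1 - b t - d t)) - snd (snd (F t))] ! i)"
  have cw1: "continuous_on {0..T} (\<lambda>t. fst (w t))" "continuous_on {0..T} (\<lambda>t. fst (snd (w t)))"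
     "continuous_on {0..T} (\<lambda>t. snd (snd (w t)))"
    using continuous_on_subset[OF cw sub] by (auto intro: continuous_intros)
  have cbd: "continuous_on {0..T} b" "continuous_on {0..T} d"
    using continuous_on_subset[OF cb sub] continuous_on_subset[OF cd sub] by auto
  have main: "q i t \<ge> 0" if i: "i < 6" for i
  proof (rule pos_inv[where n=6 and q=q and T=T and S=S and q'=q' and K="beta + 20*lam*M"])
    show "continuous_on {0..T} (q j)" if "j < 6" for j
      using that unfolding q_def
      by (rule less6) (use cw1 cbd in \<open>auto intro!: continuous_intros\<close>)
    show "countable S" by (rule cS)
    show "(q j has_real_derivative q' j s) (at s within {0..T})" if s: "s \<in> {0..T}" "s \<notin> S" and j: "j < 6" for j s
    proof -
      have s0: "s \<ge> 0" "s \<in> {0..} - S" using s by auto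
      have w': "(w has_vector_derivative F s) (at s within {0..})" using dw[OF s0(2)] unfolding F_def .
      have d1: "((\<lambda>t. fst (w t)) has_real_derivative fst (F s)) (at s within {0..})" by (rule vd_fst[OF w'])
      have d2: "((\<lambda>t. fst (snd (w t))) has_real_derivative fst (snd (F s))) (at s within {0..})"
        using vd_fst[OF vd_snd[OF w']] by simp
      have d3: "((\<lambda>t. snd (snd (w t))) has_real_derivative snd (snd (F s))) (at s within {0..})"
        using vd_snd_r[OF vd_snd[OF w']] by simp
      have db: "(b has_real_derivative beta * d s) (at s within {0..})" using bd s0 by auto
      have ddd: "(d has_real_derivative (- beta * d s + lam * Gam * d s * (1 - b s - d s))) (at s within {0..})" using dd s0 by auto
      have e2: "((\<lambda>t. b t - fst (w t)) has_real_derivative beta * d s - fst (F s)) (at s within {0..})"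
        by (rule DERIV_diff[OF db d1])
      have e4: "((\<lambda>t. d t - fst (snd (w t))) has_real_derivative (- beta * d s + lam * Gam * d s * (1 - b s - d s)) - fst (snd (F s))) (at s within {0..})"
        by (rule DERIV_diff[OF ddd d2])
      have e6: "((\<lambda>t. 1 - b t - d t - snd (snd (w t))) has_real_derivative 0 - beta * d s - (- beta * d s + lam * Gam * d s * (1 - b s - d s)) - snd (snd (F s))) (at s within {0..})"
        by (intro DERIV_diff DERIV_const db ddd d3)
      have "(q j has_real_derivative q' j s) (at s within {0..})"
        using j unfolding q_def q'_def
        by (rule less6) (simp_all only: nth6 d1 d2 d3 e2 e4 e6)
      thus ?thesis by (rule DERIV_subset) auto
    qed
    show "q j 0 \<ge> 0" if "j < 6" for j
      using that unfolding q_def by (rule less6) (use R0 in \<open>auto simp: in_R_def\<close>)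
    show "q' j s \<ge> - (beta + 20*lam*M)*N"
      if s: "s \<in> {0..T}" "s \<notin> S" and j: "j < 6" and neg: "q j s < 0" and N: "N \<ge> 0"
        and qN: "\<And>k. k < 6 \<Longrightarrow> q k s \<ge> -N" for j s N
    proof -
      interpret alg lam beta Gam M N using p N M0 by unfold_locales auto
      define A where "A = fst (w s)"
      define C where "C = fst (snd (w s))"
      define Y where "Y = snd (snd (w s))"
      have nw: "norm (w s) \<le> B1" "norm (b s) \<le> B2" "norm (d s) \<le> B3" using B1 B2 B3 s by auto
      have bA: "\<bar>A\<bar> \<le> M" "\<bar>C\<bar> \<le> M" "\<bar>Y\<bar> \<le> M" "\<bar>b s - A\<bar> \<le> M" "\<bar>d s - C\<bar> \<le> M"
        "\<bar>1 - b s - d s\<bar> \<le> M" "\<bar>1 - b s - d s - Y\<bar> \<le> M" "\<bar>d s\<bar> \<le> M"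
        using norm3[of "w s"] nw B1 B2 B3 unfolding A_def C_def Y_def M_def by (auto simp: abs_le_iff)
      have qs: "A \<ge> -N" "b s - A \<ge> -N" "C \<ge> -N" "d s - C \<ge> -N" "Y \<ge> -N" "1 - b s - d s - Y \<ge> -N"
        using qN[of 0] qN[of 1] qN[of 2] qN[of 3] qN[of 4] qN[of 5]
        unfolding q_def A_def C_def Y_def by auto
      have sg: "0 \<le> sig s" "sig s \<le> 1" using sig s by auto
      have Fs: "F s = (beta * C + lam * (b s - A) * ((A + C) + Y),
           Gam * lam * (d s - C) * Y + Gam * lam * C * (1 - b s - d s) + lam * (d s - C) * ((A + C) + Y) - beta * C,
           - Gam * lam * d s * Y + lam * sig s * ((1 - b s - d s) - Y) * (A + Y + (1 - Gam) * C))"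
        unfolding F_def fvec_def A_def C_def Y_def Let_def by simp
      have qv: "q 0 s = A" "q 1 s = b s - A" "q 2 s = C" "q 3 s = d s - C" "q 4 s = Y" "q 5 s = 1 - b s - d s - Y"
        unfolding q_def A_def C_def Y_def by simp_all
      have qv': "q' 0 s = beta * C + lam * (b s - A) * ((A + C) + Y)"
         "q' 1 s = beta * d s - (beta * C + lam * (b s - A) * ((A + C) + Y))"
         "q' 2 s = Gam * lam * (d s - C) * Y + Gam * lam * C * (1 - b s - d s) + lam * (d s - C) * ((A + C) + Y) - beta * C"
         "q' 3 s = (- beta * d s + lam * Gam * d s * (1 - b s - d s)) - (Gam * lam * (d s - C) * Y + Gam * lam * C * (1 - b s - d s) + lam * (d s - C) * ((A + C) + Y) - beta * C)"
         "q' 4 s = - Gam * lam * d s * Y + lam * sig s * ((1 - b s - d s) - Y) * (A + Y + (1 - Gam) * C)"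
         "q' 5 s = ((1 - b s - d s) - Y) * (- lam*Gam*d s - lam * sig s*(A + Y + (1-Gam)*C))"
        unfolding q'_def Fs by (simp_all add: algebra_simps)
      have c0: "q 0 s < 0 \<longrightarrow> q' 0 s \<ge> -((beta + 20*lam*M)*N)"
        unfolding qv qv' using inv_xb[of "b s" A C Y] bA qs by auto
      have c1: "q 1 s < 0 \<longrightarrow> q' 1 s \<ge> -((beta + 20*lam*M)*N)"
        unfolding qv qv' using inv_b[of "b s" A C Y "d s"] bA qs by auto
      have c2: "q 2 s < 0 \<longrightarrow> q' 2 s \<ge> -((beta + 20*lam*M)*N)"
        unfolding qv qv' using inv_xd[of "d s" C A Y "1 - b s - d s"] bA qs by auto
      have c3: "q 3 s < 0 \<longrightarrow> q' 3 s \<ge> -((beta + 20*lam*M)*N)"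
        unfolding qv qv' using inv_d[of "d s" C A Y "1 - b s - d s"] bA qs by auto
      have c4: "q 4 s < 0 \<longrightarrow> q' 4 s \<ge> -((beta + 20*lam*M)*N)"
        unfolding qv qv' using inv_y[of "d s" A C Y "1 - b s - d s" "sig s"] bA qs sg by auto
      have c5: "q 5 s < 0 \<longrightarrow> q' 5 s \<ge> -((beta + 20*lam*M)*N)"
        unfolding qv qv' using inv_s[of "d s" A C Y "1 - b s - d s" "sig s"] bA qs sg by auto
      have "q j s < 0 \<longrightarrow> q' j s \<ge> -((beta + 20*lam*M)*N)"
        using less6[where P="\<lambda>j. q j s < 0 \<longrightarrow> q' j s \<ge> -((beta + 20*lam*M)*N)", OF j c0 c1 c2 c3 c4 c5] by simp
      hence "q' j s \<ge> -((beta + 20*lam*M)*N)" using neg by simp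
      thus ?thesis by (simp only: minus_mult_left)
    qed
  qed (use i t T_def in auto)
  have "q 0 t \<ge> 0" "q 1 t \<ge> 0" "q 2 t \<ge> 0" "q 3 t \<ge> 0" "q 4 t \<ge> 0" "q 5 t \<ge> 0" using main by auto
  thus ?thesis unfolding q_def in_R_def by auto
qed



lemma inv_g:
  fixes lam beta Gam :: real and b d y :: "real \<Rightarrow> real" and v :: "real \<Rightarrow> real \<times> real"
  assumes p: "lam > 0" "beta > 0" "0 < Gam" "Gam \<le> 1"
   and bd: "\<forall>t\<ge>0. (b has_real_derivative beta * d t) (at t within {0..})"
   and dd: "\<forall>t\<ge>0. (d has_real_derivative (- beta * d t + lam * Gam * d t * (1 - b t - d t))) (at t within {0..})"
   and yb: "\<forall>t\<ge>0. 0 \<le> y t \<and> y t \<le> 1 - b t - d t"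
   and sol: "solves_g lam beta Gam b d y v"
   and I0: "0 \<le> fst (v 0)" "fst (v 0) \<le> b 0" "0 \<le> snd (v 0)" "snd (v 0) \<le> d 0"
   and t: "0 \<le> t"
  shows "0 \<le> fst (v t) \<and> fst (v t) \<le> b t \<and> 0 \<le> snd (v t) \<and> snd (v t) \<le> d t"
proof -
  have dv: "\<And>t. t \<ge> 0 \<Longrightarrow> (v has_vector_derivative gvec lam beta Gam b d t (v t) (y t)) (at t within {0..})"
    using sol unfolding solves_g_def by blast
  have cv: "continuous_on {0..} v" unfolding continuous_on_eq_continuous_within
    using has_vector_derivative_continuous[OF dv] by auto
  have cb: "continuous_on {0..} b" by (rule DERIV_continuous_on) (use bd in auto)
  have cd: "continuous_on {0..} d" by (rule DERIV_continuous_on) (use dd in auto)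
  define T where "T = t"
  have sub: "{0..T} \<subseteq> {0..}" by auto
  obtain B1 where B1: "B1 \<ge> 0" "\<forall>t\<in>{0..T}. norm (v t) \<le> B1" using bnd[OF continuous_on_subset[OF cv sub]] by blast
  obtain B2 where B2: "B2 \<ge> 0" "\<forall>t\<in>{0..T}. norm (b t) \<le> B2" using bnd[OF continuous_on_subset[OF cb sub]] by blast
  obtain B3 where B3: "B3 \<ge> 0" "\<forall>t\<in>{0..T}. norm (d t) \<le> B3" using bnd[OF continuous_on_subset[OF cd sub]] by blast
  define M where "M = 3*(B1+B2+B3) + 1"
  have M0: "M \<ge> 0" unfolding M_def using B1 B2 B3 by simp
  define F where "F = (\<lambda>t. gvec lam beta Gam b d t (v t) (y t))"
  define q where "q = (\<lambda>i. [\<lambda>t. fst (v t), \<lambda>t. b t - fst (v t), \<lambda>t. snd (v t), \<lambda>t. d t - snd (v t)] ! i)"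
  define q' where "q' = (\<lambda>i t. [fst (F t), beta * d t - fst (F t), snd (F t),
      (- beta * d t + lam * Gam * d t * (1 - b t - d t)) - snd (F t)] ! i)"
  have cw1: "continuous_on {0..T} (\<lambda>t. fst (v t))" "continuous_on {0..T} (\<lambda>t. snd (v t))"
    using continuous_on_subset[OF cv sub] by (auto intro: continuous_intros)
  have cbd: "continuous_on {0..T} b" "continuous_on {0..T} d"
    using continuous_on_subset[OF cb sub] continuous_on_subset[OF cd sub] by auto
  have main: "q i t \<ge> 0" if i: "i < 4" for i
  proof (rule pos_inv[where n=4 and q=q and T=T and S="{}" and q'=q' and K="beta + 20*lam*M"])
    show "continuous_on {0..T} (q j)" if "j < 4" for j
      using that unfolding q_def
      by (rule less4) (use cw1 cbd in \<open>auto intro!: continuous_intros\<close>)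
    show "(q j has_real_derivative q' j s) (at s within {0..T})" if s: "s \<in> {0..T}" "s \<notin> {}" and j: "j < 4" for j s
    proof -
      have s0: "s \<ge> 0" using s by auto
      have w': "(v has_vector_derivative F s) (at s within {0..})" using dv[OF s0] unfolding F_def .
      have d1: "((\<lambda>t. fst (v t)) has_real_derivative fst (F s)) (at s within {0..})" by (rule vd_fst[OF w'])
      have d2: "((\<lambda>t. snd (v t)) has_real_derivative snd (F s)) (at s within {0..})" by (rule vd_snd_r[OF w'])
      have db: "(b has_real_derivative beta * d s) (at s within {0..})" using bd s0 by auto
      have ddd: "(d has_real_derivative (- beta * d s + lam * Gam * d s * (1 - b s - d s))) (at s within {0..})" using dd s0 by auto
      have e2: "((\<lambda>t. b t - fst (v t)) has_real_derivative beta * d s - fst (F s)) (at s within {0..})"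
        by (rule DERIV_diff[OF db d1])
      have e4: "((\<lambda>t. d t - snd (v t)) has_real_derivative (- beta * d s + lam * Gam * d s * (1 - b s - d s)) - snd (F s)) (at s within {0..})"
        by (rule DERIV_diff[OF ddd d2])
      have "(q j has_real_derivative q' j s) (at s within {0..})"
        using j unfolding q_def q'_def
        by (rule less4) (simp_all only: nth4 d1 d2 e2 e4)
      thus ?thesis by (rule DERIV_subset) auto
    qed
    show "q j 0 \<ge> 0" if "j < 4" for j
      using that unfolding q_def by (rule less4) (use I0 in \<open>auto\<close>)
    show "q' j s \<ge> - (beta + 20*lam*M)*N"
      if s: "s \<in> {0..T}" "s \<notin> {}" and j: "j < 4" and neg: "q j s < 0" and N: "N \<ge> 0"
        and qN: "\<And>k. k < 4 \<Longrightarrow> q k s \<ge> -N" for j s N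
    proof -
      interpret alg lam beta Gam M N using p N M0 by unfold_locales auto
      define A where "A = fst (v s)"
      define C where "C = snd (v s)"
      define Y where "Y = y s"
      have nw: "norm (v s) \<le> B1" "norm (b s) \<le> B2" "norm (d s) \<le> B3" using B1 B2 B3 s by auto
      have Yb: "0 \<le> Y" "Y \<le> 1 - b s - d s" using yb s unfolding Y_def by auto
      have nv: "\<bar>A\<bar> \<le> norm (v s)" "\<bar>C\<bar> \<le> norm (v s)" 
        using norm_fst_le[of A C] norm_snd_le[of C A] unfolding A_def C_def by auto
      have bA: "\<bar>A\<bar> \<le> M" "\<bar>C\<bar> \<le> M" "\<bar>Y\<bar> \<le> M" "\<bar>b s - A\<bar> \<le> M" "\<bar>d s - C\<bar> \<le> M"
        "\<bar>1 - b s - d s\<bar> \<le> M"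
        using nv nw B1 B2 B3 Yb unfolding M_def by (auto simp: abs_le_iff)
      have qs: "A \<ge> -N" "b s - A \<ge> -N" "C \<ge> -N" "d s - C \<ge> -N" "Y \<ge> -N"
        using qN[of 0] qN[of 1] qN[of 2] qN[of 3] Yb N
        unfolding q_def A_def C_def by auto
      have Fs: "F s = (beta * C + lam * (b s - A) * ((A + C) + Y),
           Gam * lam * (d s - C) * Y + Gam * lam * C * (1 - b s - d s) + lam * (d s - C) * ((A + C) + Y) - beta * C)"
        unfolding F_def gvec_def A_def C_def Y_def Let_def by simp
      have qv: "q 0 s = A" "q 1 s = b s - A" "q 2 s = C" "q 3 s = d s - C"
        unfolding q_def A_def C_def by simp_all
      have qv': "q' 0 s = beta * C + lam * (b s - A) * ((A + C) + Y)"
         "q' 1 s = beta * d s - (beta * C + lam * (b s - A) * ((A + C) + Y))"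
         "q' 2 s = Gam * lam * (d s - C) * Y + Gam * lam * C * (1 - b s - d s) + lam * (d s - C) * ((A + C) + Y) - beta * C"
         "q' 3 s = (- beta * d s + lam * Gam * d s * (1 - b s - d s)) - (Gam * lam * (d s - C) * Y + Gam * lam * C * (1 - b s - d s) + lam * (d s - C) * ((A + C) + Y) - beta * C)"
        unfolding q'_def Fs by simp_all
      have c0: "q 0 s < 0 \<longrightarrow> q' 0 s \<ge> -((beta + 20*lam*M)*N)"
        unfolding qv qv' using inv_xb[of "b s" A C Y] bA qs by auto
      have c1: "q 1 s < 0 \<longrightarrow> q' 1 s \<ge> -((beta + 20*lam*M)*N)"
        unfolding qv qv' using inv_b[of "b s" A C Y "d s"] bA qs by auto
      have c2: "q 2 s < 0 \<longrightarrow> q' 2 s \<ge> -((beta + 20*lam*M)*N)"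
        unfolding qv qv' using inv_xd[of "d s" C A Y "1 - b s - d s"] bA qs by auto
      have c3: "q 3 s < 0 \<longrightarrow> q' 3 s \<ge> -((beta + 20*lam*M)*N)"
        unfolding qv qv' using inv_d[of "d s" C A Y "1 - b s - d s"] bA qs by auto
      have "q j s < 0 \<longrightarrow> q' j s \<ge> -((beta + 20*lam*M)*N)"
        using less4[where P="\<lambda>j. q j s < 0 \<longrightarrow> q' j s \<ge> -((beta + 20*lam*M)*N)", OF j c0 c1 c2 c3] by simp
      hence "q' j s \<ge> -((beta + 20*lam*M)*N)" using neg by simp
      thus ?thesis by (simp only: minus_mult_left)
    qed
  qed (use i t T_def in auto)
  have "q 0 t \<ge> 0" "q 1 t \<ge> 0" "q 2 t \<ge> 0" "q 3 t \<ge> 0" using main by auto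
  thus ?thesis unfolding q_def by auto
qed



lemma cmp_fa:
  fixes lam beta Gam :: real and b d sig1 sig2 :: "real \<Rightarrow> real" and w1 w2 :: "real \<Rightarrow> real \<times> real \<times> real"
  assumes p: "lam > 0" "beta > 0" "0 < Gam" "Gam \<le> 1"
   and bd: "\<forall>t\<ge>0. (b has_real_derivative beta * d t) (at t within {0..})"
   and dd: "\<forall>t\<ge>0. (d has_real_derivative (- beta * d t + lam * Gam * d t * (1 - b t - d t))) (at t within {0..})"
   and sig: "\<forall>t\<ge>0. 0 \<le> sig2 t \<and> sig2 t \<le> 1 \<and> sig2 t \<le> sig1 t"
   and sol1: "solves_f lam beta Gam b d sig1 w1"
   and sol2: "solves_f lam beta Gam b d sig2 w2"
   and R1: "\<forall>t\<ge>0. in_R b d t (w1 t)" and R2: "\<forall>t\<ge>0. in_R b d t (w2 t)"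
   and V0: "vge3 (w1 0) (w2 0)"
   and t: "0 \<le> t"
  shows "vge3 (w1 t) (w2 t)"
proof -
  from sol1 obtain S1 where cw1: "continuous_on {0..} w1" and cS1: "countable S1"
    and dw1: "\<And>t. t \<in> {0..} - S1 \<Longrightarrow> (w1 has_vector_derivative fvec lam beta Gam b d t (w1 t) (sig1 t)) (at t within {0..})"
    unfolding solves_f_def by blast
  from sol2 obtain S2 where cw2: "continuous_on {0..} w2" and cS2: "countable S2"
    and dw2: "\<And>t. t \<in> {0..} - S2 \<Longrightarrow> (w2 has_vector_derivative fvec lam beta Gam b d t (w2 t) (sig2 t)) (at t within {0..})"
    unfolding solves_f_def by blast
  have cb: "continuous_on {0..} b" by (rule DERIV_continuous_on) (use bd in auto)
  have cd: "continuous_on {0..} d" by (rule DERIV_continuous_on) (use dd in auto)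
  define T where "T = t"
  define S where "S = S1 \<union> S2"
  have cS: "countable S" unfolding S_def using cS1 cS2 by simp
  have sub: "{0..T} \<subseteq> {0..}" by auto
  obtain B2 where B2: "B2 \<ge> 0" "\<forall>t\<in>{0..T}. norm (b t) \<le> B2" using bnd[OF continuous_on_subset[OF cb sub]] by blast
  obtain B3 where B3: "B3 \<ge> 0" "\<forall>t\<in>{0..T}. norm (d t) \<le> B3" using bnd[OF continuous_on_subset[OF cd sub]] by blast
  define M where "M = 2*(B2+B3) + 1"
  have M0: "M \<ge> 0" unfolding M_def using B2 B3 by simp
  define F1 where "F1 = (\<lambda>t. fvec lam beta Gam b d t (w1 t) (sig1 t))"
  define F2 where "F2 = (\<lambda>t. fvec lam beta Gam b d t (w2 t) (sig2 t))"
  define q where "q = (\<lambda>i. [\<lambda>t. fst (w1 t) - fst (w2 t), \<lambda>t. fst (snd (w1 t)) - fst (snd (w2 t)),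
      \<lambda>t. snd (snd (w1 t)) - snd (snd (w2 t))] ! i)"
  define q' where "q' = (\<lambda>i t. [fst (F1 t) - fst (F2 t), fst (snd (F1 t)) - fst (snd (F2 t)),
      snd (snd (F1 t)) - snd (snd (F2 t))] ! i)"
  have cc: "continuous_on {0..T} (\<lambda>t. fst (w1 t))" "continuous_on {0..T} (\<lambda>t. fst (snd (w1 t)))"
     "continuous_on {0..T} (\<lambda>t. snd (snd (w1 t)))"
     "continuous_on {0..T} (\<lambda>t. fst (w2 t))" "continuous_on {0..T} (\<lambda>t. fst (snd (w2 t)))"
     "continuous_on {0..T} (\<lambda>t. snd (snd (w2 t)))"
    using continuous_on_subset[OF cw1 sub] continuous_on_subset[OF cw2 sub] by (auto intro: continuous_intros)
  have main: "q i t \<ge> 0" if i: "i < 3" for i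
  proof (rule pos_inv[where n=3 and q=q and T=T and S=S and q'=q' and K="beta + 20*lam*M"])
    show "continuous_on {0..T} (q j)" if "j < 3" for j
      using that unfolding q_def
      by (rule less3) (use cc in \<open>auto intro!: continuous_intros\<close>)
    show "countable S" by (rule cS)
    show "(q j has_real_derivative q' j s) (at s within {0..T})" if s: "s \<in> {0..T}" "s \<notin> S" and j: "j < 3" for j s
    proof -
      have s1: "s \<in> {0..} - S1" "s \<in> {0..} - S2" using s unfolding S_def by auto
      have w1': "(w1 has_vector_derivative F1 s) (at s within {0..})" using dw1[OF s1(1)] unfolding F1_def .
      have w2': "(w2 has_vector_derivative F2 s) (at s within {0..})" using dw2[OF s1(2)] unfolding F2_def .
      have e1: "((\<lambda>t. fst (w1 t) - fst (w2 t)) has_real_derivative fst (F1 s) - fst (F2 s)) (at s within {0..})"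
        by (rule DERIV_diff[OF vd_fst[OF w1'] vd_fst[OF w2']])
      have e2: "((\<lambda>t. fst (snd (w1 t)) - fst (snd (w2 t))) has_real_derivative fst (snd (F1 s)) - fst (snd (F2 s))) (at s within {0..})"
        using DERIV_diff[OF vd_fst[OF vd_snd[OF w1']] vd_fst[OF vd_snd[OF w2']]] by simp
      have e3: "((\<lambda>t. snd (snd (w1 t)) - snd (snd (w2 t))) has_real_derivative snd (snd (F1 s)) - snd (snd (F2 s))) (at s within {0..})"
        using DERIV_diff[OF vd_snd_r[OF vd_snd[OF w1']] vd_snd_r[OF vd_snd[OF w2']]] by simp
      have "(q j has_real_derivative q' j s) (at s within {0..})"
        using j unfolding q_def q'_def
        by (rule less3) (simp_all only: nth3 e1 e2 e3)
      thus ?thesis by (rule DERIV_subset) auto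
    qed
    show "q j 0 \<ge> 0" if "j < 3" for j
      using that unfolding q_def by (rule less3) (use V0 in \<open>auto simp: vge3_def\<close>)
    show "q' j s \<ge> - (beta + 20*lam*M)*N"
      if s: "s \<in> {0..T}" "s \<notin> S" and j: "j < 3" and neg: "q j s < 0" and N: "N \<ge> 0"
        and qN: "\<And>k. k < 3 \<Longrightarrow> q k s \<ge> -N" for j s N
    proof -
      interpret alg lam beta Gam M N using p N M0 by unfold_locales auto
      define A1 where "A1 = fst (w1 s)"
      define C1 where "C1 = fst (snd (w1 s))"
      define Y1 where "Y1 = snd (snd (w1 s))"
      define A2 where "A2 = fst (w2 s)"
      define C2 where "C2 = fst (snd (w2 s))"
      define Y2 where "Y2 = snd (snd (w2 s))"
      have nw: "norm (b s) \<le> B2" "norm (d s) \<le> B3" using B2 B3 s by auto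
      have r1: "0 \<le> A1" "A1 \<le> b s" "0 \<le> C1" "C1 \<le> d s" "0 \<le> Y1" "Y1 \<le> 1 - b s - d s"
        using R1 s unfolding in_R_def A1_def C1_def Y1_def by auto
      have r2: "0 \<le> A2" "A2 \<le> b s" "0 \<le> C2" "C2 \<le> d s" "0 \<le> Y2" "Y2 \<le> 1 - b s - d s"
        using R2 s unfolding in_R_def A2_def C2_def Y2_def by auto
      have bb: "b s \<le> M" "d s \<le> M" "1 - b s - d s \<le> M" using nw B2 B3 unfolding M_def by auto
      have qs: "A1 - A2 \<ge> -N" "C1 - C2 \<ge> -N" "Y1 - Y2 \<ge> -N"
        using qN[of 0] qN[of 1] qN[of 2] unfolding q_def A1_def C1_def Y1_def A2_def C2_def Y2_def by auto
      have sg: "0 \<le> sig2 s" "sig2 s \<le> 1" "sig2 s \<le> sig1 s" using sig s by auto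
      have G1: "0 \<le> 1 - Gam" using p by simp
      have Q: "A1 + Y1 + (1-Gam)*C1 \<ge> 0" "A2 + Y2 + (1-Gam)*C2 \<ge> 0" using r1 r2 G1 by auto
      have F1s: "F1 s = (beta * C1 + lam * (b s - A1) * ((A1 + C1) + Y1),
           Gam * lam * (d s - C1) * Y1 + Gam * lam * C1 * (1 - b s - d s) + lam * (d s - C1) * ((A1 + C1) + Y1) - beta * C1,
           - Gam * lam * d s * Y1 + lam * sig1 s * ((1 - b s - d s) - Y1) * (A1 + Y1 + (1 - Gam) * C1))"
        unfolding F1_def fvec_def A1_def C1_def Y1_def Let_def by simp
      have F2s: "F2 s = (beta * C2 + lam * (b s - A2) * ((A2 + C2) + Y2),
           Gam * lam * (d s - C2) * Y2 + Gam * lam * C2 * (1 - b s - d s) + lam * (d s - C2) * ((A2 + C2) + Y2) - beta * C2,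
           - Gam * lam * d s * Y2 + lam * sig2 s * ((1 - b s - d s) - Y2) * (A2 + Y2 + (1 - Gam) * C2))"
        unfolding F2_def fvec_def A2_def C2_def Y2_def Let_def by simp
      have qv: "q 0 s = A1 - A2" "q 1 s = C1 - C2" "q 2 s = Y1 - Y2"
        unfolding q_def A1_def C1_def Y1_def A2_def C2_def Y2_def by simp_all
      have c0: "q 0 s < 0 \<longrightarrow> q' 0 s \<ge> -((beta + 20*lam*M)*N)"
        unfolding qv q'_def nth3 F1s F2s fst_conv snd_conv
        using cmp_xb[of "b s" A1 A2 C1 C2 Y1 Y2] bb qs r1 r2 by auto
      have c1: "q 1 s < 0 \<longrightarrow> q' 1 s \<ge> -((beta + 20*lam*M)*N)"
        unfolding qv q'_def nth3 F1s F2s fst_conv snd_conv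
        using cmp_xd[of "d s" C1 "1 - b s - d s" C2 A1 A2 Y1 Y2] bb qs r1 r2 by auto
      have c2: "q 2 s < 0 \<longrightarrow> q' 2 s \<ge> -((beta + 20*lam*M)*N)"
        unfolding qv q'_def nth3 F1s F2s fst_conv snd_conv
        using cmp_y[of "d s" "1 - b s - d s" Y1 Y2 A1 A2 C1 C2 "sig2 s" "sig1 s"] bb qs r1 r2 sg Q by auto
      have "q j s < 0 \<longrightarrow> q' j s \<ge> -((beta + 20*lam*M)*N)"
        using less3[where P="\<lambda>j. q j s < 0 \<longrightarrow> q' j s \<ge> -((beta + 20*lam*M)*N)", OF j c0 c1 c2] by simp
      hence "q' j s \<ge> -((beta + 20*lam*M)*N)" using neg by simp
      thus ?thesis by (simp only: minus_mult_left)
    qed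
  qed (use i t T_def in auto)
  have "q 0 t \<ge> 0" "q 1 t \<ge> 0" "q 2 t \<ge> 0" using main by auto
  thus ?thesis unfolding q_def vge3_def by auto
qed



lemma cmp_gb:
  fixes lam beta Gam :: real and b d y1 y2 :: "real \<Rightarrow> real" and v1 v2 :: "real \<Rightarrow> real \<times> real"
  assumes p: "lam > 0" "beta > 0" "0 < Gam" "Gam \<le> 1"
   and bd: "\<forall>t\<ge>0. (b has_real_derivative beta * d t) (at t within {0..})"
   and dd: "\<forall>t\<ge>0. (d has_real_derivative (- beta * d t + lam * Gam * d t * (1 - b t - d t))) (at t within {0..})"
   and yb: "\<forall>t\<ge>0. 1 - b t - d t \<ge> y1 t \<and> y1 t \<ge> y2 t \<and> y2 t \<ge> 0"
   and sol1: "solves_g lam beta Gam b d y1 v1"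
   and sol2: "solves_g lam beta Gam b d y2 v2"
   and R1: "\<forall>t\<ge>0. 0 \<le> fst (v1 t) \<and> fst (v1 t) \<le> b t \<and> 0 \<le> snd (v1 t) \<and> snd (v1 t) \<le> d t"
   and R2: "\<forall>t\<ge>0. 0 \<le> fst (v2 t) \<and> fst (v2 t) \<le> b t \<and> 0 \<le> snd (v2 t) \<and> snd (v2 t) \<le> d t"
   and V0: "vge2 (v1 0) (v2 0)"
   and t: "0 \<le> t"
  shows "vge2 (v1 t) (v2 t)"
proof -
  have dv1: "\<And>t. t \<ge> 0 \<Longrightarrow> (v1 has_vector_derivative gvec lam beta Gam b d t (v1 t) (y1 t)) (at t within {0..})"
    using sol1 unfolding solves_g_def by blast
  have dv2: "\<And>t. t \<ge> 0 \<Longrightarrow> (v2 has_vector_derivative gvec lam beta Gam b d t (v2 t) (y2 t)) (at t within {0..})"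
    using sol2 unfolding solves_g_def by blast
  have cv1: "continuous_on {0..} v1" unfolding continuous_on_eq_continuous_within
    using has_vector_derivative_continuous[OF dv1] by auto
  have cv2: "continuous_on {0..} v2" unfolding continuous_on_eq_continuous_within
    using has_vector_derivative_continuous[OF dv2] by auto
  have cb: "continuous_on {0..} b" by (rule DERIV_continuous_on) (use bd in auto)
  have cd: "continuous_on {0..} d" by (rule DERIV_continuous_on) (use dd in auto)
  define T where "T = t"
  have sub: "{0..T} \<subseteq> {0..}" by auto
  obtain B2 where B2: "B2 \<ge> 0" "\<forall>t\<in>{0..T}. norm (b t) \<le> B2" using bnd[OF continuous_on_subset[OF cb sub]] by blast
  obtain B3 where B3: "B3 \<ge> 0" "\<forall>t\<in>{0..T}. norm (d t) \<le> B3" using bnd[OF continuous_on_subset[OF cd sub]] by blast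
  define M where "M = 2*(B2+B3) + 1"
  have M0: "M \<ge> 0" unfolding M_def using B2 B3 by simp
  define F1 where "F1 = (\<lambda>t. gvec lam beta Gam b d t (v1 t) (y1 t))"
  define F2 where "F2 = (\<lambda>t. gvec lam beta Gam b d t (v2 t) (y2 t))"
  define q where "q = (\<lambda>i. [\<lambda>t. fst (v1 t) - fst (v2 t), \<lambda>t. snd (v1 t) - snd (v2 t)] ! i)"
  define q' where "q' = (\<lambda>i t. [fst (F1 t) - fst (F2 t), snd (F1 t) - snd (F2 t)] ! i)"
  have cc: "continuous_on {0..T} (\<lambda>t. fst (v1 t))" "continuous_on {0..T} (\<lambda>t. snd (v1 t))"
     "continuous_on {0..T} (\<lambda>t. fst (v2 t))" "continuous_on {0..T} (\<lambda>t. snd (v2 t))"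
    using continuous_on_subset[OF cv1 sub] continuous_on_subset[OF cv2 sub] by (auto intro: continuous_intros)
  have main: "q i t \<ge> 0" if i: "i < 2" for i
  proof (rule pos_inv[where n=2 and q=q and T=T and S="{}" and q'=q' and K="beta + 20*lam*M"])
    show "continuous_on {0..T} (q j)" if "j < 2" for j
      using that unfolding q_def
      by (rule less2) (use cc in \<open>auto intro!: continuous_intros\<close>)
    show "(q j has_real_derivative q' j s) (at s within {0..T})" if s: "s \<in> {0..T}" "s \<notin> {}" and j: "j < 2" for j s
    proof -
      have s0: "s \<ge> 0" using s by auto
      have w1': "(v1 has_vector_derivative F1 s) (at s within {0..})" using dv1[OF s0] unfolding F1_def .
      have w2': "(v2 has_vector_derivative F2 s) (at s within {0..})" using dv2[OF s0] unfolding F2_def .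
      have e1: "((\<lambda>t. fst (v1 t) - fst (v2 t)) has_real_derivative fst (F1 s) - fst (F2 s)) (at s within {0..})"
        by (rule DERIV_diff[OF vd_fst[OF w1'] vd_fst[OF w2']])
      have e2: "((\<lambda>t. snd (v1 t) - snd (v2 t)) has_real_derivative snd (F1 s) - snd (F2 s)) (at s within {0..})"
        by (rule DERIV_diff[OF vd_snd_r[OF w1'] vd_snd_r[OF w2']])
      have "(q j has_real_derivative q' j s) (at s within {0..})"
        using j unfolding q_def q'_def
        by (rule less2) (simp_all only: nth2 e1 e2)
      thus ?thesis by (rule DERIV_subset) auto
    qed
    show "q j 0 \<ge> 0" if "j < 2" for j
      using that unfolding q_def by (rule less2) (use V0 in \<open>auto simp: vge2_def\<close>)
    show "q' j s \<ge> - (beta + 20*lam*M)*N"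
      if s: "s \<in> {0..T}" "s \<notin> {}" and j: "j < 2" and neg: "q j s < 0" and N: "N \<ge> 0"
        and qN: "\<And>k. k < 2 \<Longrightarrow> q k s \<ge> -N" for j s N
    proof -
      interpret alg lam beta Gam M N using p N M0 by unfold_locales auto
      define A1 where "A1 = fst (v1 s)"
      define C1 where "C1 = snd (v1 s)"
      define Y1 where "Y1 = y1 s"
      define A2 where "A2 = fst (v2 s)"
      define C2 where "C2 = snd (v2 s)"
      define Y2 where "Y2 = y2 s"
      have s0: "0 \<le> s" using s by simp
      have R1s: "0 \<le> fst (v1 s) \<and> fst (v1 s) \<le> b s \<and> 0 \<le> snd (v1 s) \<and> snd (v1 s) \<le> d s" using R1 s0 by blast
      have R2s: "0 \<le> fst (v2 s) \<and> fst (v2 s) \<le> b s \<and> 0 \<le> snd (v2 s) \<and> snd (v2 s) \<le> d s" using R2 s0 by blast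
      have ybs: "1 - b s - d s \<ge> y1 s \<and> y1 s \<ge> y2 s \<and> y2 s \<ge> 0" using yb s0 by blast
      have nw: "norm (b s) \<le> B2" "norm (d s) \<le> B3" using B2 B3 s by auto
      have r1: "0 \<le> A1" "A1 \<le> b s" "0 \<le> C1" "C1 \<le> d s" "0 \<le> Y1" "Y1 \<le> 1 - b s - d s"
        using R1s ybs unfolding A1_def C1_def Y1_def by linarith+
      have r2: "0 \<le> A2" "A2 \<le> b s" "0 \<le> C2" "C2 \<le> d s" "0 \<le> Y2" "Y2 \<le> Y1"
        using R2s ybs unfolding A2_def C2_def Y2_def Y1_def by linarith+
      have bb: "b s \<le> M" "d s \<le> M" "1 - b s - d s \<le> M" using nw B2 B3 unfolding M_def by auto
      have F1s: "F1 s = (beta * C1 + lam * (b s - A1) * ((A1 + C1) + Y1),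
           Gam * lam * (d s - C1) * Y1 + Gam * lam * C1 * (1 - b s - d s) + lam * (d s - C1) * ((A1 + C1) + Y1) - beta * C1)"
        unfolding F1_def gvec_def A1_def C1_def Y1_def Let_def by simp
      have F2s: "F2 s = (beta * C2 + lam * (b s - A2) * ((A2 + C2) + Y2),
           Gam * lam * (d s - C2) * Y2 + Gam * lam * C2 * (1 - b s - d s) + lam * (d s - C2) * ((A2 + C2) + Y2) - beta * C2)"
        unfolding F2_def gvec_def A2_def C2_def Y2_def Let_def by simp
      have qv: "q 0 s = A1 - A2" "q 1 s = C1 - C2"
        unfolding q_def A1_def C1_def A2_def C2_def by simp_all
      have qs: "A1 - A2 \<ge> -N" "C1 - C2 \<ge> -N" "Y1 - Y2 \<ge> -N"
        using qN[of 0] qN[of 1] r2(6) N unfolding qv by simp_all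
      have c0: "q 0 s < 0 \<longrightarrow> q' 0 s \<ge> -((beta + 20*lam*M)*N)"
        unfolding qv q'_def nth2 F1s F2s fst_conv snd_conv
        using cmp_xb[of "b s" A1 A2 C1 C2 Y1 Y2] bb qs r1 r2 by auto
      have c1: "q 1 s < 0 \<longrightarrow> q' 1 s \<ge> -((beta + 20*lam*M)*N)"
        unfolding qv q'_def nth2 F1s F2s fst_conv snd_conv
        using cmp_xd[of "d s" C1 "1 - b s - d s" C2 A1 A2 Y1 Y2] bb qs r1 r2 by auto
      have "q j s < 0 \<longrightarrow> q' j s \<ge> -((beta + 20*lam*M)*N)"
        using less2[where P="\<lambda>j. q j s < 0 \<longrightarrow> q' j s \<ge> -((beta + 20*lam*M)*N)", OF j c0 c1] by simp
      hence "q' j s \<ge> -((beta + 20*lam*M)*N)" using neg by simp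
      thus ?thesis by (simp only: minus_mult_left)
    qed
  qed (use i t T_def in auto)
  have "q 0 t \<ge> 0" "q 1 t \<ge> 0" using main by auto
  thus ?thesis unfolding q_def vge2_def by auto
qed


theorem lemma4:
  fixes lam beta Gam d0 :: real and b d :: "real \<Rightarrow> real"
  assumes "lam > 0" and "beta > 0" and "0 < Gam" and "Gam \<le> 1" and "0 < d0" and "d0 < 1"
    and "\<forall>t\<ge>0. (b has_real_derivative beta * d t) (at t within {0..})"
    and "\<forall>t\<ge>0. (d has_real_derivative (- beta * d t + lam * Gam * d t * (1 - b t - d t)))
                  (at t within {0..})"
    and "b 0 = 0" and "d 0 = d0"
  shows
   "(\<forall>sig1 sig2 w1 w2.
       admissible sig1 \<and> admissible sig2 \<and> (\<forall>t\<ge>0. sig1 t \<ge> sig2 t) \<and>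
       solves_f lam beta Gam b d sig1 w1 \<and> solves_f lam beta Gam b d sig2 w2 \<and>
       in_R b d 0 (w1 0) \<and> in_R b d 0 (w2 0) \<and> vge3 (w1 0) (w2 0)
       \<longrightarrow> (\<forall>t\<ge>0. vge3 (w1 t) (w2 t)))
    \<and>
    (\<forall>y1 y2 v1 v2.
       continuous_on {0..} y1 \<and> continuous_on {0..} y2 \<and>
       (\<forall>t\<ge>0. 1 - b t - d t \<ge> y1 t \<and> y1 t \<ge> y2 t \<and> y2 t \<ge> 0) \<and>
       solves_g lam beta Gam b d y1 v1 \<and> solves_g lam beta Gam b d y2 v2 \<and>
       0 \<le> fst (v1 0) \<and> fst (v1 0) \<le> b 0 \<and> 0 \<le> snd (v1 0) \<and> snd (v1 0) \<le> d 0 \<and>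
       0 \<le> fst (v2 0) \<and> fst (v2 0) \<le> b 0 \<and> 0 \<le> snd (v2 0) \<and> snd (v2 0) \<le> d 0 \<and>
       vge2 (v1 0) (v2 0)
       \<longrightarrow> (\<forall>t\<ge>0. vge2 (v1 t) (v2 t)))"
  proof -
  note p = assms(1-4)
  note bd = assms(7) and dd = assms(8)
  have A: "\<forall>t\<ge>0. vge3 (w1 t) (w2 t)"
    if h: "admissible sig1 \<and> admissible sig2 \<and> (\<forall>t\<ge>0. sig1 t \<ge> sig2 t) \<and>
       solves_f lam beta Gam b d sig1 w1 \<and> solves_f lam beta Gam b d sig2 w2 \<and>
       in_R b d 0 (w1 0) \<and> in_R b d 0 (w2 0) \<and> vge3 (w1 0) (w2 0)" for sig1 sig2 w1 w2
  proof -
    have s1: "\<forall>t\<ge>0. 0 \<le> sig1 t \<and> sig1 t \<le> 1" and s2: "\<forall>t\<ge>0. 0 \<le> sig2 t \<and> sig2 t \<le> 1"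
      using h unfolding admissible_def by auto
    have R1: "\<forall>t\<ge>0. in_R b d t (w1 t)" using inv_a[OF p bd dd s1] h by blast
    have R2: "\<forall>t\<ge>0. in_R b d t (w2 t)" using inv_a[OF p bd dd s2] h by blast
    have sg: "\<forall>t\<ge>0. 0 \<le> sig2 t \<and> sig2 t \<le> 1 \<and> sig2 t \<le> sig1 t" using s2 h by auto
    show ?thesis using cmp_fa[OF p bd dd sg _ _ R1 R2] h by blast
  qed
  have B: "\<forall>t\<ge>0. vge2 (v1 t) (v2 t)"
    if h: "continuous_on {0..} y1 \<and> continuous_on {0..} y2 \<and>
       (\<forall>t\<ge>0. 1 - b t - d t \<ge> y1 t \<and> y1 t \<ge> y2 t \<and> y2 t \<ge> 0) \<and>
       solves_g lam beta Gam b d y1 v1 \<and> solves_g lam beta Gam b d y2 v2 \<and>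
       0 \<le> fst (v1 0) \<and> fst (v1 0) \<le> b 0 \<and> 0 \<le> snd (v1 0) \<and> snd (v1 0) \<le> d 0 \<and>
       0 \<le> fst (v2 0) \<and> fst (v2 0) \<le> b 0 \<and> 0 \<le> snd (v2 0) \<and> snd (v2 0) \<le> d 0 \<and>
       vge2 (v1 0) (v2 0)" for y1 y2 v1 v2
  proof -
    have yb: "\<forall>t\<ge>0. 1 - b t - d t \<ge> y1 t \<and> y1 t \<ge> y2 t \<and> y2 t \<ge> 0" using h by blast
    have y1: "\<forall>t\<ge>0. 0 \<le> y1 t \<and> y1 t \<le> 1 - b t - d t" using yb by force
    have y2: "\<forall>t\<ge>0. 0 \<le> y2 t \<and> y2 t \<le> 1 - b t - d t" using yb by force
    have sol1: "solves_g lam beta Gam b d y1 v1" and sol2: "solves_g lam beta Gam b d y2 v2" using h by blast+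
    have R1: "\<forall>t\<ge>0. 0 \<le> fst (v1 t) \<and> fst (v1 t) \<le> b t \<and> 0 \<le> snd (v1 t) \<and> snd (v1 t) \<le> d t"
      using inv_g[OF p bd dd y1 sol1] h by blast
    have R2: "\<forall>t\<ge>0. 0 \<le> fst (v2 t) \<and> fst (v2 t) \<le> b t \<and> 0 \<le> snd (v2 t) \<and> snd (v2 t) \<le> d t"
      using inv_g[OF p bd dd y2 sol2] h by blast
    show ?thesis using cmp_gb[OF p bd dd yb sol1 sol2 R1 R2] h by blast
  qed
  show ?thesis using A B by blast
qed

end
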